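(* Let $\omega$ be a good weight function satisfying $\omega(t)=o(t)$ as $t\to\infty$, with associated weight matrix $\{W^x\}_{x>0}$. Then for every $x>0$ there exist $y_3\ge y_2\ge y_1\ge x$ and $D\ge1$ such that for all $t>0$ $$\overline{\Gamma}_{w^{y_3}}(D^3t)\le\underline{\Gamma}_{w^{y_2}}(D^2t)\le\overline{\Gamma}_{w^{y_2}}(D^2t)\le\underline{\Gamma}_{w^{y_1}}(Dt)\le\frac{\underline{\Gamma}_{w^x}(t)}{2}.$$ Moreover one may choose $y_1\ge2x$ and $y_2\ge2y_1$, so that $w^x_{j+k}\le w^{y_1}_jw^{y_1}_k$ and $w^{y_1}_{j+k}\le w^{y_2}_jw^{y_2}_k$ for all $j,k\in\mathbb{N}$.
   Context: A weight function is a continuous increasing $\omega:[0,\infty)\to[0,\infty)$ with $\omega(0)=0$, $\omega(t)\to\infty$, $\omega(2t)=O(\omega(t))$, $\omega(t)=O(t)$, $\log t=o(\omega(t))$, and $\varphi(t)=\omega(e^t)$ convex; normalized so that $\omega|_{[0,1]}=0$, $\varphi^*(t)=\sup_{s\ge0}(st-\varphi(s))$. Its weight matrix is $W^x_k=\exp(\frac1x\varphi^*(xk))$, $x>0$, and $\vartheta^x_k=W^x_k/W^x_{k-1}$, $w^x_k=W^x_k/k!$. $\omega$ is good if $\forall x>0\ \exists y>0\ \exists C\ge1\ \forall 1\le j\le k:\ \vartheta^x_j/j\le C\vartheta^y_k/k$. For a positive sequence $m$ with $m_0=1$, $m_k^{1/k}\to\infty$, $m_{k+1}/m_k\to\infty$: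 $h_m(t)=\inf_k m_kt^k$, $\overline{\Gamma}_m(t)=\min\{k:h_m(t)=m_kt^k\}$, $\underline{\Gamma}_m(t)=\min\{k:m_{k+1}/m_k\ge1/t\}$ for $t>0$. *)

theory Defs
  imports "HOL-Analysis.Analysis" "HOL-Library.Landau_Symbols"
begin

definition weight_function :: "(real \<Rightarrow> real) \<Rightarrow> bool" where
  "weight_function \<omega> \<longleftrightarrow>
     continuous_on {0..} \<omega> \<and>
     mono_on {0..} \<omega> \<and>
     (\<forall>t\<ge>0. \<omega> t \<ge> 0) \<and>
     \<omega> 0 = 0 \<and>
     filterlim \<omega> at_top at_top \<and>
     (\<lambda>t. \<omega> (2 * t)) \<in> O[at_top](\<omega>) \<and>
     \<omega> \<in> O[at_top](\<lambda>t. t) \<and>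
     (\<lambda>t. ln t) \<in> o[at_top](\<omega>) \<and>
     convex_on UNIV (\<lambda>t. \<omega> (exp t)) \<and>
     (\<forall>t\<in>{0..1}. \<omega> t = 0)"

definition phi :: "(real \<Rightarrow> real) \<Rightarrow> real \<Rightarrow> real" where
  "phi \<omega> t = \<omega> (exp t)"

definition phi_star :: "(real \<Rightarrow> real) \<Rightarrow> real \<Rightarrow> real" where
  "phi_star \<omega> t = (SUP s\<in>{0..}. s * t - phi \<omega> s)"

definition WM :: "(real \<Rightarrow> real) \<Rightarrow> real \<Rightarrow> nat \<Rightarrow> real" where
  "WM \<omega> x k = exp (phi_star \<omega> (x * real k) / x)"

definition theta :: "(real \<Rightarrow> real) \<Rightarrow> real \<Rightarrow> nat \<Rightarrow> real" where
  "theta \<omega> x k = WM \<omega> x k / WM \<omega> x (k - 1)"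

definition wm :: "(real \<Rightarrow> real) \<Rightarrow> real \<Rightarrow> nat \<Rightarrow> real" where
  "wm \<omega> x k = WM \<omega> x k / fact k"

definition good_weight :: "(real \<Rightarrow> real) \<Rightarrow> bool" where
  "good_weight \<omega> \<longleftrightarrow>
     (\<forall>x>0. \<exists>y>0. \<exists>C\<ge>1. \<forall>j k. 1 \<le> j \<and> j \<le> k \<longrightarrow>
        theta \<omega> x j / real j \<le> C * theta \<omega> y k / real k)"

definition h_fun :: "(nat \<Rightarrow> real) \<Rightarrow> real \<Rightarrow> real" where
  "h_fun m t = (INF k. m k * t ^ k)"

definition Gamma_upper :: "(nat \<Rightarrow> real) \<Rightarrow> real \<Rightarrow> nat" where
  "Gamma_upper m t = (LEAST k. h_fun m t = m k * t ^ k)"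

definition Gamma_lower :: "(nat \<Rightarrow> real) \<Rightarrow> real \<Rightarrow> nat" where
  "Gamma_lower m t = (LEAST k. m (Suc k) / m k \<ge> 1 / t)"

end

theory Submission
  imports Defs
begin

lemma slope_swap: "((f::real\<Rightarrow>real) u - f v) / (u - v) = (f v - f u) / (v - u)"
  by (metis minus_diff_eq minus_divide_divide)

lemma slope_mono:
  fixes f :: "real \<Rightarrow> real"
  assumes f: "convex_on UNIV f" and ab: "a < b" and cd: "c < d" and "a \<le> c" "b \<le> d"
  shows "(f b - f a)/(b - a) \<le> (f d - f c)/(d - c)"
proof -
  have 1: "(f b - f a)/(b - a) \<le> (f d - f a)/(d - a)"
  proof (cases "b = d")
    case False
    then have "b < d" using assms by auto
    from convex_on_slope_le(1)[OF f _ _ ab this] show ?thesis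
      by (simp add: slope_swap)
  qed simp
  have 2: "(f d - f a)/(d - a) \<le> (f d - f c)/(d - c)"
  proof (cases "a = c")
    case False
    then have "a < c" using assms by auto
    from convex_on_slope_le(2)[OF f _ _ this cd] show ?thesis
      by (simp add: slope_swap)
  qed simp
  from 1 2 show ?thesis by linarith
qed

lemma phi_nonneg: "weight_function \<omega> \<Longrightarrow> phi \<omega> s \<ge> 0"
  unfolding phi_def weight_function_def by (simp add: less_imp_le)

lemma phi_zero: "weight_function \<omega> \<Longrightarrow> phi \<omega> 0 = 0"
  unfolding phi_def weight_function_def by simp

lemma ps_bdd:
  assumes wf: "weight_function \<omega>"
  shows "bdd_above ((\<lambda>s. s * t - phi \<omega> s) ` {0..})"
proof -
  have lo: "(\<lambda>t. ln t) \<in> o[at_top](\<omega>)" using wf by (simp add: weight_function_def)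
  have "eventually (\<lambda>T. norm (ln T) \<le> (1/(\<bar>t\<bar>+1)) * norm (\<omega> T)) at_top"
    by (rule landau_o.smallD[OF lo]) (simp add: add_pos_nonneg)
  then obtain T1 where T1: "\<And>T. T \<ge> T1 \<Longrightarrow> norm (ln T) \<le> (1/(\<bar>t\<bar>+1)) * norm (\<omega> T)"
    by (auto simp: eventually_at_top_linorder)
  define T2 where "T2 = max T1 1"
  have T2: "T2 \<ge> 1" "T2 \<ge> T1" unfolding T2_def by auto
  have "s * t - phi \<omega> s \<le> ln T2 * \<bar>t\<bar>" if s: "s \<ge> 0" for s
  proof (cases "s \<ge> ln T2")
    case True
    then have "exp s \<ge> T2" using T2 by (metis exp_le_cancel_iff exp_ln less_le_trans zero_less_one)
    hence "exp s \<ge> T1" using T2 by linarith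
    from T1[OF this] have a: "\<bar>s\<bar> \<le> (1/(\<bar>t\<bar>+1)) * \<bar>\<omega> (exp s)\<bar>" by simp
    have "\<omega> (exp s) \<ge> 0" using phi_nonneg[OF wf, of s] by (simp add: phi_def)
    with a s have "(\<bar>t\<bar>+1) * s \<le> \<omega> (exp s)"
      by (simp add: field_simps add_pos_nonneg)
    moreover have "s * t \<le> s * \<bar>t\<bar>" using s by (simp add: mult_left_mono)
    moreover have "0 \<le> ln T2 * \<bar>t\<bar>" using T2 by simp
    ultimately show ?thesis using s by (simp add: phi_def algebra_simps)
  next
    case False
    then have "s * t \<le> ln T2 * \<bar>t\<bar>" using s
      by (smt (verit) abs_ge_self abs_ge_zero mult_left_mono mult_right_mono)
    then show ?thesis using phi_nonneg[OF wf, of s] by linarith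
  qed
  thus ?thesis by (intro bdd_aboveI2) auto
qed

lemma ps_upper: "weight_function \<omega> \<Longrightarrow> s \<ge> 0 \<Longrightarrow> s * t - phi \<omega> s \<le> phi_star \<omega> t"
  unfolding phi_star_def by (rule cSUP_upper[OF _ ps_bdd]) auto

lemma ps_least: "(\<And>s. s \<ge> 0 \<Longrightarrow> s * t - phi \<omega> s \<le> B) \<Longrightarrow> phi_star \<omega> t \<le> B"
  unfolding phi_star_def by (rule cSUP_least) auto

lemma ps_zero: "weight_function \<omega> \<Longrightarrow> phi_star \<omega> 0 = 0"
proof -
  assume wf: "weight_function \<omega>"
  have "phi_star \<omega> 0 \<le> 0" by (rule ps_least) (simp add: phi_nonneg[OF wf])
  moreover have "0 * 0 - phi \<omega> 0 \<le> phi_star \<omega> 0" by (rule ps_upper[OF wf]) simp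
  ultimately show ?thesis using phi_zero[OF wf] by simp
qed

lemma ps_convex:
  assumes wf: "weight_function \<omega>"
  shows "convex_on UNIV (phi_star \<omega>)"
proof (rule convex_onI)
  fix u a b :: real assume u: "u > 0" "u < 1"
  show "phi_star \<omega> ((1 - u) *\<^sub>R a + u *\<^sub>R b) \<le> (1 - u) * phi_star \<omega> a + u * phi_star \<omega> b"
  proof (simp, rule ps_least)
    fix s :: real assume s: "s \<ge> 0"
    have "(1-u) * (s * a - phi \<omega> s) \<le> (1-u) * phi_star \<omega> a"
      using u ps_upper[OF wf s] by (simp add: mult_left_mono)
    moreover have "u * (s * b - phi \<omega> s) \<le> u * phi_star \<omega> b"
      using u ps_upper[OF wf s] by (simp add: mult_left_mono)
    ultimately show "s * ((1 - u) * a + u * b) - phi \<omega> s \<le> (1 - u) * phi_star \<omega> a + u * phi_star \<omega> b"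
      by (simp add: algebra_simps)
  qed
qed simp

lemma WM_pos: "WM \<omega> x k > 0" by (simp add: WM_def)

lemma theta_pos: "theta \<omega> x k > 0" by (simp add: theta_def WM_pos)

lemma wm_pos: "wm \<omega> x k > 0" by (simp add: wm_def WM_pos)

lemma wm_0: "weight_function \<omega> \<Longrightarrow> wm \<omega> x 0 = 1"
  by (simp add: wm_def WM_def ps_zero)

lemma wm_ratio: "wm \<omega> x (Suc n) / wm \<omega> x n = theta \<omega> x (Suc n) / real (Suc n)"
proof -
  have a: "WM \<omega> x n > 0" "WM \<omega> x (Suc n) > 0" by (simp_all add: WM_def)
  have f: "(fact n :: real) \<noteq> 0" by simp
  show ?thesis unfolding wm_def theta_def fact_Suc using a f
    by (simp add: divide_simps)
qed

lemma theta_slope: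
  assumes "k \<ge> 1" "x > 0"
  shows "theta \<omega> x k = exp ((phi_star \<omega> (x * real k) - phi_star \<omega> (x * (real k - 1))) / (x * real k - x * (real k - 1)))"
proof -
  have "real (k - 1) = real k - 1" using assms by (simp add: of_nat_diff)
  then show ?thesis using assms
    by (simp add: theta_def WM_def exp_diff[symmetric] diff_divide_distrib algebra_simps)
qed

lemma theta_le:
  assumes wf: "weight_function \<omega>" and "x > 0" "y > 0" "j \<ge> 1" "k \<ge> 1"
    and "x * (real j - 1) \<le> y * (real k - 1)" "x * real j \<le> y * real k"
  shows "theta \<omega> x j \<le> theta \<omega> y k"
  unfolding theta_slope[OF assms(4,2)] theta_slope[OF assms(5,3)] exp_le_cancel_iff
  by (rule slope_mono[OF ps_convex[OF wf]]) (use assms in \<open>auto simp: algebra_simps\<close>)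

lemma theta_mono_param:
  assumes wf: "weight_function \<omega>" and "0 < x" "x \<le> y" "k \<ge> 1"
  shows "theta \<omega> x k \<le> theta \<omega> y k"
proof (rule theta_le[OF wf])
  show "x * (real k - 1) \<le> y * (real k - 1)" using assms by (intro mult_right_mono) auto
  show "x * real k \<le> y * real k" using assms by (intro mult_right_mono) auto
qed (use assms in auto)

lemma ps_ratio_mono:
  assumes wf: "weight_function \<omega>" and "0 < a" "a \<le> b"
  shows "phi_star \<omega> (a * real n) / a \<le> phi_star \<omega> (b * real n) / b"
proof (cases "n = 0")
  case True then show ?thesis by (simp add: ps_zero[OF wf])
next
  case False
  have "(phi_star \<omega> (a * real n) - phi_star \<omega> 0) / (a * real n - 0)
      \<le> (phi_star \<omega> (b * real n) - phi_star \<omega> 0) / (b * real n - 0)"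
    by (rule slope_mono[OF ps_convex[OF wf]]) (use assms False in \<open>auto intro: mult_right_mono\<close>)
  then have h: "phi_star \<omega> (a * real n) / (a * real n) \<le> phi_star \<omega> (b * real n) / (b * real n)"
    by (simp add: ps_zero[OF wf])
  have n: "real n > 0" using False by simp
  have "phi_star \<omega> (a * real n) / a = (phi_star \<omega> (a * real n) / (a * real n)) * real n"
    using n assms by (simp add: field_simps)
  also have "\<dots> \<le> (phi_star \<omega> (b * real n) / (b * real n)) * real n"
    using h n by (intro mult_right_mono) auto
  also have "\<dots> = phi_star \<omega> (b * real n) / b"
    using n assms by (simp add: field_simps)
  finally show ?thesis .
qed

lemma WM_submult:
  assumes wf: "weight_function \<omega>" and x: "x > 0" and y: "y \<ge> 2 * x"
  shows "WM \<omega> x (j + k) \<le> WM \<omega> y j * WM \<omega> y k"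
proof -
  have "phi_star \<omega> ((1 - 1/2) *\<^sub>R (2*x*real j) + (1/2) *\<^sub>R (2*x*real k))
     \<le> (1 - 1/2) * phi_star \<omega> (2*x*real j) + (1/2) * phi_star \<omega> (2*x*real k)"
    by (rule convex_onD[OF ps_convex[OF wf]]) auto
  then have "phi_star \<omega> (x * real (j + k)) \<le> (phi_star \<omega> (2*x*real j) + phi_star \<omega> (2*x*real k)) / 2"
    by (simp add: algebra_simps)
  then have "phi_star \<omega> (x * real (j + k)) / x \<le> phi_star \<omega> ((2*x)*real j) / (2*x) + phi_star \<omega> ((2*x)*real k) / (2*x)"
    using x by (simp add: field_simps)
  also have "\<dots> \<le> phi_star \<omega> (y*real j) / y + phi_star \<omega> (y*real k) / y"
    using ps_ratio_mono[OF wf, of "2*x" y] x y by (intro add_mono) auto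
  finally show ?thesis by (simp add: WM_def exp_add[symmetric])
qed

lemma fact_add_ge: "fact j * fact k \<le> (fact (j + k) :: real)"
proof -
  have "fact j * fact k * real ((j + k) choose j) = fact (j + k)"
    using binomial_fact_lemma[of j "j+k"] by (metis add_diff_cancel_left' le_add1 of_nat_fact of_nat_mult)
  moreover have "real ((j + k) choose j) \<ge> 1" by (simp add: Suc_leI)
  moreover have "fact j * fact k \<ge> (0::real)" by simp
  ultimately show ?thesis by (metis mult_cancel_left1 mult_left_mono)
qed

lemma wm_submult:
  assumes wf: "weight_function \<omega>" and x: "x > 0" and y: "y \<ge> 2 * x"
  shows "wm \<omega> x (j + k) \<le> wm \<omega> y j * wm \<omega> y k"
proof -
  have "WM \<omega> x (j + k) / fact (j+k) \<le> WM \<omega> y j * WM \<omega> y k / fact (j+k)"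
    using WM_submult[OF assms] by (simp add: divide_right_mono)
  also have "\<dots> \<le> WM \<omega> y j * WM \<omega> y k / (fact j * fact k)"
    using fact_add_ge[of j k] WM_pos[of \<omega> y j] WM_pos[of \<omega> y k]
    by (intro divide_left_mono) auto
  finally show ?thesis by (simp add: wm_def)
qed

lemma gamma_lower_exists:
  assumes wf: "weight_function \<omega>" and o: "\<omega> \<in> o[at_top](\<lambda>t. t)" and x: "x > 0" and t: "t > 0"
  shows "\<exists>n. wm \<omega> x (Suc n) / wm \<omega> x n \<ge> 1/t"
proof (rule ccontr)
  assume "\<not> ?thesis"
  hence lt: "\<And>n. wm \<omega> x (Suc n) / wm \<omega> x n < 1/t" by (simp add: not_le)
  define M where "M = max 1 (1/t)"
  have M: "M \<ge> 1" "1/t \<le> M" unfolding M_def by auto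
  have up: "wm \<omega> x k \<le> M^k" for k
  proof (induction k)
    case 0 then show ?case by (simp add: wm_0[OF wf])
  next
    case (Suc k)
    have "wm \<omega> x (Suc k) = wm \<omega> x k * (wm \<omega> x (Suc k) / wm \<omega> x k)"
      using wm_pos[of \<omega> x k] by simp
    also have "\<dots> \<le> M^k * M"
      using Suc lt[of k] M wm_pos[of \<omega> x k] wm_pos[of \<omega> x "Suc k"]
      by (intro mult_mono) auto
    finally show ?case by (simp add: mult.commute)
  qed
  define A where "A = 4 * M"
  have A: "A \<ge> 4" using M by (simp add: A_def)
  define \<epsilon> where "\<epsilon> = x * ln 2 / A"
  have \<epsilon>: "\<epsilon> > 0" using x A by (simp add: \<epsilon>_def)
  have "eventually (\<lambda>T. norm (\<omega> T) \<le> \<epsilon> * norm T) at_top"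
    by (rule landau_o.smallD[OF o \<epsilon>])
  then obtain T0 where T0: "\<And>T. T \<ge> T0 \<Longrightarrow> norm (\<omega> T) \<le> \<epsilon> * norm T"
    by (auto simp: eventually_at_top_linorder)
  define k where "k = nat \<lceil>T0\<rceil> + 1"
  have k1: "k \<ge> 1" by (simp add: k_def)
  have kT: "real k \<ge> T0" unfolding k_def by linarith
  have rk: "real k \<ge> 1" using k1 by simp
  have Ak: "A * real k \<ge> real k" using A rk by simp
  have Ak1: "A * real k \<ge> 1" using Ak rk by linarith
  have "\<bar>\<omega> (A * real k)\<bar> \<le> \<epsilon> * \<bar>A * real k\<bar>" using T0[of "A * real k"] Ak kT by simp
  then have om: "\<omega> (A * real k) \<le> x * real k * ln 2"
    using Ak1 A by (simp add: \<epsilon>_def mult_ac)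
  have "ln (A * real k) * (x * real k) - phi \<omega> (ln (A * real k)) \<le> phi_star \<omega> (x * real k)"
    by (rule ps_upper[OF wf]) (use Ak1 in simp)
  moreover have "phi \<omega> (ln (A * real k)) = \<omega> (A * real k)"
    using Ak1 by (simp add: phi_def)
  ultimately have that_h: "x * (real k * (ln (A * real k) - ln 2)) \<le> phi_star \<omega> (x * real k)"
    using om by (simp add: algebra_simps)
  have "real k * ln (A * real k / 2) \<le> phi_star \<omega> (x * real k) / x"
  proof -
    have "ln (A * real k / 2) = ln (A * real k) - ln 2" using Ak1 A k1 by (simp add: ln_div)
    with that_h show ?thesis using x by (simp add: pos_le_divide_eq mult.commute)
  qed
  then have "exp (real k * ln (A * real k / 2)) \<le> WM \<omega> x k"
    by (simp add: WM_def)
  moreover have "exp (real k * ln (A * real k / 2)) = (A * real k / 2) ^ k"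
    using Ak1 by (simp add: exp_of_nat_mult)
  ultimately have W: "(A * real k / 2) ^ k \<le> WM \<omega> x k" by simp
  have e2: "A * real k / 2 = 2 * M * real k" by (simp add: A_def)
  have "(2 * M) ^ k * real k ^ k = (A * real k / 2) ^ k"
    by (simp only: e2 power_mult_distrib)
  also have "\<dots> \<le> WM \<omega> x k" by (rule W)
  finally have "(2 * M) ^ k * real k ^ k \<le> WM \<omega> x k" .
  moreover have "fact k \<le> real k ^ k" using fact_le_power[of k] by simp
  moreover have "(fact k :: real) > 0" by simp
  moreover have "(2 * M) ^ k * fact k \<le> (2 * M) ^ k * real k ^ k"
    using M \<open>fact k \<le> real k ^ k\<close> by (intro mult_left_mono) auto
  ultimately have "(2 * M) ^ k * fact k \<le> WM \<omega> x k" by linarith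
  then have "(2 * M) ^ k \<le> wm \<omega> x k"
    by (simp add: wm_def field_simps)
  moreover have "M ^ k < (2 * M) ^ k"
    using M k1 by (intro power_strict_mono) auto
  ultimately show False using up[of k] by linarith
qed

lemma gamma_upper_bound:
  fixes m :: "nat \<Rightarrow> real"
  assumes pos: "\<And>j. m j > 0" and s: "s > 0"
    and tail: "\<And>j. j \<ge> k \<Longrightarrow> m (Suc j) / m j \<ge> 1/s"
  shows "Gamma_upper m s \<le> k \<and> h_fun m s = m (Gamma_upper m s) * s ^ Gamma_upper m s"
proof -
  define g where "g j = m j * s ^ j" for j
  have gstep: "g j \<le> g (Suc j)" if "j \<ge> k" for j
  proof -
    have "1 \<le> s * (m (Suc j) / m j)" using tail[OF that] s by (simp add: field_simps)
    then have "m j \<le> s * m (Suc j)" using pos[of j] by (simp add: field_simps)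
    then show ?thesis unfolding g_def using s by (simp add: mult_right_mono mult.assoc mult.left_commute)
  qed
  have tailg: "g k \<le> g j" if "j \<ge> k" for j
    using that
  proof (induction j rule: dec_induct)
    case (step j) then show ?case using gstep[of j] by linarith
  qed simp
  define v where "v = Min (g ` {..k})"
  have "v \<in> g ` {..k}" unfolding v_def by (rule Min_in) auto
  then obtain i0 where i0: "i0 \<le> k" "g i0 = v" by auto
  have mn: "g i0 \<le> g j" for j
  proof (cases "j \<le> k")
    case True then show ?thesis using i0 unfolding v_def by (auto intro: Min_le)
  next
    case False
    have "g i0 \<le> g k" using i0 unfolding v_def by (auto intro: Min_le)
    then show ?thesis using tailg[of j] False by linarith
  qed
  have h: "h_fun m s = g i0"
    unfolding h_fun_def g_def[symmetric] by (rule cInf_eq_minimum) (use mn in auto)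
  have "Gamma_upper m s \<le> i0"
    unfolding Gamma_upper_def by (rule Least_le) (simp add: h g_def)
  moreover have "h_fun m s = m (Gamma_upper m s) * s ^ Gamma_upper m s"
    unfolding Gamma_upper_def by (rule LeastI[of _ i0]) (simp add: h g_def)
  ultimately show ?thesis using i0 by simp
qed

lemma gamma_lower_le_upper:
  fixes m :: "nat \<Rightarrow> real"
  assumes pos: "\<And>j. m j > 0" and s: "s > 0"
    and att: "h_fun m s = m (Gamma_upper m s) * s ^ Gamma_upper m s"
  shows "Gamma_lower m s \<le> Gamma_upper m s"
proof -
  define k0 where "k0 = Gamma_upper m s"
  have "h_fun m s \<le> m (Suc k0) * s ^ Suc k0"
    unfolding h_fun_def
    by (rule cINF_lower) (use pos s in \<open>auto intro!: bdd_belowI2[where m=0] less_imp_le\<close>)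
  then have "m k0 * s ^ k0 \<le> m (Suc k0) * s ^ k0 * s" using att k0_def by (simp add: mult_ac)
  then have "m k0 \<le> m (Suc k0) * s" using s by (simp add: mult_ac)
  then have "m (Suc k0) / m k0 \<ge> 1 / s" using pos[of k0] s by (simp add: field_simps)
  then show ?thesis unfolding Gamma_lower_def k0_def[symmetric] by (rule Least_le)
qed

lemma claimA:
  assumes good: "\<forall>j k. 1 \<le> j \<and> j \<le> k \<longrightarrow> theta \<omega> a j / real j \<le> C * theta \<omega> b k / real k"
    and CD: "C \<le> D" "D \<ge> 1" and s: "s > 0"
    and hk: "wm \<omega> a (Suc k) / wm \<omega> a k \<ge> 1/s"
    and j: "j \<ge> k"
  shows "wm \<omega> b (Suc j) / wm \<omega> b j \<ge> 1/(D * s)"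
proof -
  have "1/s \<le> theta \<omega> a (Suc k) / real (Suc k)" using hk by (simp add: wm_ratio)
  also have "\<dots> \<le> C * theta \<omega> b (Suc j) / real (Suc j)" using good[rule_format, of "Suc k" "Suc j"] j by simp
  also have "\<dots> = C * (theta \<omega> b (Suc j) / real (Suc j))" by simp
  also have "\<dots> \<le> D * (theta \<omega> b (Suc j) / real (Suc j))"
    using CD theta_pos[of \<omega> b "Suc j"] by (intro mult_right_mono) auto
  finally have "1/s \<le> D * (wm \<omega> b (Suc j) / wm \<omega> b j)" by (simp add: wm_ratio)
  then show ?thesis using s CD by (simp add: field_simps)
qed

theorem proposition3p7:
  fixes \<omega> :: "real \<Rightarrow> real"
  assumes "weight_function \<omega>"
    and "good_weight \<omega>"
    and "\<omega> \<in> o[at_top](\<lambda>t. t)"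
    and "x > 0"
  shows "\<exists>y1 y2 y3 D. x \<le> y1 \<and> y1 \<le> y2 \<and> y2 \<le> y3 \<and> D \<ge> (1::real) \<and>
     (\<forall>t>0.
        Gamma_upper (wm \<omega> y3) (D ^ 3 * t) \<le> Gamma_lower (wm \<omega> y2) (D ^ 2 * t) \<and>
        Gamma_lower (wm \<omega> y2) (D ^ 2 * t) \<le> Gamma_upper (wm \<omega> y2) (D ^ 2 * t) \<and>
        Gamma_upper (wm \<omega> y2) (D ^ 2 * t) \<le> Gamma_lower (wm \<omega> y1) (D * t) \<and>
        real (Gamma_lower (wm \<omega> y1) (D * t)) \<le> real (Gamma_lower (wm \<omega> x) t) / 2) \<and>
     y1 \<ge> 2 * x \<and> y2 \<ge> 2 * y1 \<and>
     (\<forall>j k. wm \<omega> x (j + k) \<le> wm \<omega> y1 j * wm \<omega> y1 k) \<and>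
     (\<forall>j k. wm \<omega> y1 (j + k) \<le> wm \<omega> y2 j * wm \<omega> y2 k)"
proof -
  note wf = assms(1) and gw = assms(2) and o = assms(3) and x = assms(4)
  define y1 where "y1 = 4 * x"
  have y1: "y1 > 0" "y1 \<ge> 2*x" "x \<le> y1" using x by (auto simp: y1_def)
  from gw y1(1) obtain y' C1 where y': "y' > 0" "C1 \<ge> 1"
    and g1': "\<forall>j k. 1 \<le> j \<and> j \<le> k \<longrightarrow> theta \<omega> y1 j / real j \<le> C1 * theta \<omega> y' k / real k"
    unfolding good_weight_def by blast
  define y2 where "y2 = max y' (2*y1)"
  have y2: "y2 > 0" "y2 \<ge> 2*y1" "y' \<le> y2" "y1 \<le> y2" using y' y1 by (auto simp: y2_def)
  have g1: "\<forall>j k. 1 \<le> j \<and> j \<le> k \<longrightarrow> theta \<omega> y1 j / real j \<le> C1 * theta \<omega> y2 k / real k"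
  proof (intro allI impI)
    fix j k :: nat assume jk: "1 \<le> j \<and> j \<le> k"
    have "theta \<omega> y' k \<le> theta \<omega> y2 k" using theta_mono_param[OF wf y'(1) y2(3)] jk by auto
    hence "C1 * theta \<omega> y' k / real k \<le> C1 * theta \<omega> y2 k / real k"
      using y' by (simp add: divide_right_mono mult_left_mono)
    with g1' jk show "theta \<omega> y1 j / real j \<le> C1 * theta \<omega> y2 k / real k" by (meson order_trans)
  qed
  from gw y2(1) obtain y'' C2 where y'': "y'' > 0" "C2 \<ge> 1"
    and g2': "\<forall>j k. 1 \<le> j \<and> j \<le> k \<longrightarrow> theta \<omega> y2 j / real j \<le> C2 * theta \<omega> y'' k / real k"
    unfolding good_weight_def by blast
  define y3 where "y3 = max y'' y2"
  have y3: "y3 > 0" "y'' \<le> y3" "y2 \<le> y3" using y'' y2 by (auto simp: y3_def)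
  have g2: "\<forall>j k. 1 \<le> j \<and> j \<le> k \<longrightarrow> theta \<omega> y2 j / real j \<le> C2 * theta \<omega> y3 k / real k"
  proof (intro allI impI)
    fix j k :: nat assume jk: "1 \<le> j \<and> j \<le> k"
    have "theta \<omega> y'' k \<le> theta \<omega> y3 k" using theta_mono_param[OF wf y''(1) y3(2)] jk by auto
    hence "C2 * theta \<omega> y'' k / real k \<le> C2 * theta \<omega> y3 k / real k"
      using y'' by (simp add: divide_right_mono mult_left_mono)
    with g2' jk show "theta \<omega> y2 j / real j \<le> C2 * theta \<omega> y3 k / real k" by (meson order_trans)
  qed
  define D0 where "D0 = theta \<omega> x 2 / theta \<omega> y1 1"
  define D where "D = max (max 1 C1) (max C2 D0)"
  have D: "D \<ge> 1" "C1 \<le> D" "C2 \<le> D" "D0 \<le> D" by (auto simp: D_def)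
  have main: "Gamma_upper (wm \<omega> y3) (D ^ 3 * t) \<le> Gamma_lower (wm \<omega> y2) (D ^ 2 * t) \<and>
        Gamma_lower (wm \<omega> y2) (D ^ 2 * t) \<le> Gamma_upper (wm \<omega> y2) (D ^ 2 * t) \<and>
        Gamma_upper (wm \<omega> y2) (D ^ 2 * t) \<le> Gamma_lower (wm \<omega> y1) (D * t) \<and>
        real (Gamma_lower (wm \<omega> y1) (D * t)) \<le> real (Gamma_lower (wm \<omega> x) t) / 2"
    if t: "t > 0" for t
  proof -
    obtain n0 where n0: "wm \<omega> x (Suc n0) / wm \<omega> x n0 \<ge> 1/t"
      using gamma_lower_exists[OF wf o x t] by blast
    define n where "n = Gamma_lower (wm \<omega> x) t"
    have hn: "wm \<omega> x (Suc n) / wm \<omega> x n \<ge> 1/t"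
      unfolding n_def Gamma_lower_def by (rule LeastI[of _ n0]) (rule n0)
    hence hn': "1/t \<le> theta \<omega> x (Suc n) / real (Suc n)" by (simp add: wm_ratio)
    define m where "m = n div 2"
    have Dt: "D * t > 0" using D t by simp
    have dt: "1/(D*t) \<le> 1/t" using D t by (simp add: field_simps)
    have hm': "1/(D*t) \<le> theta \<omega> y1 (Suc m) / real (Suc m)"
    proof (cases "n \<ge> 2")
      case True
      have n1: "n \<le> 4 * m" "Suc n \<le> 4 * Suc m" using True unfolding m_def by presburger+
      have r1: "real n \<le> 4 * real m" "real n + 1 \<le> 4 * (real m + 1)"
        using n1 by (simp_all only: of_nat_le_iff[symmetric] of_nat_mult of_nat_Suc, simp_all)
      have "theta \<omega> x (Suc n) \<le> theta \<omega> y1 (Suc m)"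
      proof (rule theta_le[OF wf x y1(1)])
        have a1: "x * real n \<le> x * (4 * real m)" using r1 x by (intro mult_left_mono) auto
        have a2: "x * (real n + 1) \<le> x * (4 * (real m + 1))" using r1 x by (intro mult_left_mono) auto
        show "x * (real (Suc n) - 1) \<le> y1 * (real (Suc m) - 1)"
          using a1 by (simp add: y1_def algebra_simps)
        show "x * real (Suc n) \<le> y1 * real (Suc m)"
          using a2 by (simp add: y1_def algebra_simps)
      qed auto
      hence "theta \<omega> x (Suc n) / real (Suc n) \<le> theta \<omega> y1 (Suc m) / real (Suc n)"
        by (simp add: divide_right_mono)
      also have "\<dots> \<le> theta \<omega> y1 (Suc m) / real (Suc m)"
        using theta_pos[of \<omega> y1 "Suc m"] by (intro divide_left_mono) (auto simp: m_def)
      finally show ?thesis using hn' dt by linarith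
    next
      case False
      then have "n = 0 \<or> n = 1" by auto
      then show ?thesis
      proof
        assume n: "n = 0"
        have "theta \<omega> x 1 \<le> theta \<omega> y1 1" using theta_mono_param[OF wf x y1(3)] by simp
        then show ?thesis using hn' dt n by (simp add: m_def)
      next
        assume n: "n = 1"
        have "theta \<omega> x 2 / theta \<omega> y1 1 \<le> D" using D(4) by (simp add: D0_def)
        then have "theta \<omega> x 2 \<le> D * theta \<omega> y1 1" using theta_pos[of \<omega> y1 1]
          by (simp add: divide_le_eq)
        moreover have "theta \<omega> x 2 / 2 \<le> theta \<omega> x 2" using theta_pos[of \<omega> x 2] by simp
        ultimately have "1/t \<le> D * theta \<omega> y1 1" using hn' n by (simp add: numeral_2_eq_2)
        then have "1/(D*t) \<le> theta \<omega> y1 1" using D t by (simp add: field_simps)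
        then show ?thesis using n by (simp add: m_def)
      qed
    qed
    have hm: "wm \<omega> y1 (Suc m) / wm \<omega> y1 m \<ge> 1/(D*t)" using hm' by (simp add: wm_ratio)
    define L1 where "L1 = Gamma_lower (wm \<omega> y1) (D*t)"
    have L1m: "L1 \<le> m" unfolding L1_def Gamma_lower_def by (rule Least_le) (rule hm)
    have hL1: "wm \<omega> y1 (Suc L1) / wm \<omega> y1 L1 \<ge> 1/(D*t)"
      unfolding L1_def Gamma_lower_def by (rule LeastI[of _ m]) (rule hm)
    have DDt: "D * (D * t) > 0" using D Dt by simp
    have tail2: "\<And>j. j \<ge> L1 \<Longrightarrow> wm \<omega> y2 (Suc j) / wm \<omega> y2 j \<ge> 1/(D*(D*t))"
      by (rule claimA[OF g1 D(2) D(1) Dt hL1])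
    have U2: "Gamma_upper (wm \<omega> y2) (D*(D*t)) \<le> L1 \<and>
       h_fun (wm \<omega> y2) (D*(D*t)) = wm \<omega> y2 (Gamma_upper (wm \<omega> y2) (D*(D*t))) * (D*(D*t)) ^ Gamma_upper (wm \<omega> y2) (D*(D*t))"
      by (rule gamma_upper_bound[where m="wm \<omega> y2", OF wm_pos[of \<omega> y2] DDt tail2])
    define L2 where "L2 = Gamma_lower (wm \<omega> y2) (D*(D*t))"
    have hL2: "wm \<omega> y2 (Suc L2) / wm \<omega> y2 L2 \<ge> 1/(D*(D*t))"
      unfolding L2_def Gamma_lower_def by (rule LeastI[of _ L1]) (rule tail2, simp)
    have L2U2: "L2 \<le> Gamma_upper (wm \<omega> y2) (D*(D*t))"
      unfolding L2_def by (rule gamma_lower_le_upper[where m="wm \<omega> y2", OF wm_pos[of \<omega> y2] DDt conjunct2[OF U2]])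
    have DDDt: "D * (D * (D * t)) > 0" using D DDt by simp
    have tail3: "\<And>j. j \<ge> L2 \<Longrightarrow> wm \<omega> y3 (Suc j) / wm \<omega> y3 j \<ge> 1/(D*(D*(D*t)))"
      by (rule claimA[OF g2 D(3) D(1) DDt hL2])
    have U3: "Gamma_upper (wm \<omega> y3) (D*(D*(D*t))) \<le> L2"
      using gamma_upper_bound[where m="wm \<omega> y3", OF wm_pos[of \<omega> y3] DDDt tail3] by blast
    have e: "D^2*t = D*(D*t)" "D^3*t = D*(D*(D*t))" by (simp_all add: power2_eq_square power3_eq_cube mult_ac)
    have "2 * L1 \<le> n" using L1m unfolding m_def by linarith
    then have "2 * real L1 \<le> real n" by (metis of_nat_le_iff of_nat_mult of_nat_numeral)
    then have "real L1 \<le> real n / 2" by simp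
    then show ?thesis unfolding e using U3 L2U2 U2 L2_def L1_def n_def by auto
  qed
  show ?thesis
    apply (rule exI[of _ y1], rule exI[of _ y2], rule exI[of _ y3], rule exI[of _ D])
    using y1 y2 y3 D main wm_submult[OF wf x y1(2)] wm_submult[OF wf y1(1) y2(2)] by auto
qed

end
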